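(* Let $r,s,t,a,b,c$ be real numbers with $t\neq0$, and let $H_n^{(3)}$ and $h_n^{(3)}$ be the third-order Horadam and generalized Tribonacci numbers defined in the context. Then for every integer $n\ge0$, $$\big(H_{n+2}^{(3)}\big)^{2}+s\big(H_{n+1}^{(3)}\big)^{2}+2tH_{n}^{(3)}H_{n+1}^{(3)}=(c^{2}+sb^{2}+2tab)h_{2n+1}^{(3)}+\big(b^{2}(t-rs)+2tac+2sbc-2rtab\big)h_{2n}^{(3)}+t(ta^{2}-rb^{2}+2bc)h_{2n-1}^{(3)}$$ $$=cH_{2n+2}^{(3)}+(sb+ta)H_{2n+1}^{(3)}+tbH_{2n}^{(3)}.$$
   Context: Third-order Horadam numbers: $H_0^{(3)}=a$, $H_1^{(3)}=b$, $H_2^{(3)}=c$, $H_{n+3}^{(3)}=rH_{n+2}^{(3)}+sH_{n+1}^{(3)}+tH_n^{(3)}$ for $n\ge0$. Generalized Tribonacci numbers: $h_0^{(3)}=0$, $h_1^{(3)}=1$, $h_2^{(3)}=r$, $h_{n+3}^{(3)}=rh_{n+2}^{(3)}+sh_{n+1}^{(3)}+th_n^{(3)}$ for $n\ge0$; the value $h_{-1}^{(3)}$ (needed for $n=0$) is obtained by running the recurrence backwards, giving $h_{-1}^{(3)}=0$. *)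

theory Defs
  imports Complex_Main
begin

fun horadam3 :: "real \<Rightarrow> real \<Rightarrow> real \<Rightarrow> real \<Rightarrow> real \<Rightarrow> real \<Rightarrow> nat \<Rightarrow> real" where
  "horadam3 r s t a b c 0 = a"
| "horadam3 r s t a b c (Suc 0) = b"
| "horadam3 r s t a b c (Suc (Suc 0)) = c"
| "horadam3 r s t a b c (Suc (Suc (Suc n))) =
     r * horadam3 r s t a b c (Suc (Suc n)) + s * horadam3 r s t a b c (Suc n) + t * horadam3 r s t a b c n"

fun trib3 :: "real \<Rightarrow> real \<Rightarrow> real \<Rightarrow> nat \<Rightarrow> real" where
  "trib3 r s t 0 = 0"
| "trib3 r s t (Suc 0) = 1"
| "trib3 r s t (Suc (Suc 0)) = r"
| "trib3 r s t (Suc (Suc (Suc n))) =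
     r * trib3 r s t (Suc (Suc n)) + s * trib3 r s t (Suc n) + t * trib3 r s t n"

text \<open>trib3_pred r s t k = h_{k-1}, using h_{-1} = 0 (obtained by running the
  recurrence backwards, as in the paper) for k = 0.\<close>
definition trib3_pred :: "real \<Rightarrow> real \<Rightarrow> real \<Rightarrow> nat \<Rightarrow> real" where
  "trib3_pred r s t k = (if k = 0 then 0 else trib3 r s t (k - 1))"

end

theory Submission
  imports Defs
begin

definition BB :: "real \<Rightarrow> real \<Rightarrow> real \<Rightarrow> (nat \<Rightarrow> real) \<Rightarrow> (nat \<Rightarrow> real) \<Rightarrow> nat \<Rightarrow> nat \<Rightarrow> real" where
  "BB r s t G F m n = G (m+2) * F (n+2) + s * G (m+1) * F (n+1) + t * (G m * F (n+1) + G (m+1) * F n)"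

lemma BB_shift:
  assumes G: "\<And>k. G (k+3) = r * G (k+2) + s * G (k+1) + t * G k"
      and F: "\<And>k. F (k+3) = r * F (k+2) + s * F (k+1) + t * F k"
  shows "BB r s t G F (Suc m) n = BB r s t G F m (Suc n)"
proof -
  have g: "G (Suc m + 2) = r * G (m+2) + s * G (m+1) + t * G m" using G[of m] by (simp add: numeral_eq_Suc)
  have f: "F (Suc n + 2) = r * F (n+2) + s * F (n+1) + t * F n" using F[of n] by (simp add: numeral_eq_Suc)
  show ?thesis unfolding BB_def g f by (simp add: algebra_simps)
qed

lemma BB_sum:
  assumes G: "\<And>k. G (k+3) = r * G (k+2) + s * G (k+1) + t * G k"
      and F: "\<And>k. F (k+3) = r * F (k+2) + s * F (k+1) + t * F k"
  shows "BB r s t G F m n = BB r s t G F (m+n) 0"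
proof (induction n arbitrary: m)
  case (Suc n)
  then show ?case using BB_shift[OF G F, of m n] by simp
qed simp

lemma H_rec: "horadam3 r s t a b c (k+3) = r * horadam3 r s t a b c (k+2) + s * horadam3 r s t a b c (k+1) + t * horadam3 r s t a b c k"
  by (simp add: numeral_eq_Suc)

lemma F_rec: "trib3_pred r s t (k+3) = r * trib3_pred r s t (k+2) + s * trib3_pred r s t (k+1) + t * trib3_pred r s t k"
  by (cases k) (simp_all add: trib3_pred_def numeral_eq_Suc)


lemma F012: "trib3_pred r s t 0 = 0" "trib3_pred r s t 1 = 0" "trib3_pred r s t 2 = 1" "trib3_pred r s t (Suc 0) = 0" "trib3_pred r s t (Suc (Suc 0)) = 1"
  by (simp_all add: trib3_pred_def numeral_eq_Suc)

lemma H012: "horadam3 r s t a b c 0 = a" "horadam3 r s t a b c 1 = b" "horadam3 r s t a b c 2 = c" "horadam3 r s t a b c (Suc 0) = b" "horadam3 r s t a b c (Suc (Suc 0)) = c"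
  by (simp_all add: numeral_eq_Suc)

lemma H_F: "horadam3 r s t a b c (k+2) = c * trib3_pred r s t (k+2) + (s*b+t*a) * trib3_pred r s t (k+1) + t*b*trib3_pred r s t k"
proof -
  have "BB r s t (horadam3 r s t a b c) (trib3_pred r s t) k 0 = BB r s t (horadam3 r s t a b c) (trib3_pred r s t) 0 k"
    using BB_sum[of "horadam3 r s t a b c" r s t "trib3_pred r s t", OF H_rec F_rec, of 0 k] by simp
  then show ?thesis unfolding BB_def by (simp add: F012 H012 algebra_simps)
qed

lemma HH: "(horadam3 r s t a b c (n + 2))^2 + s * (horadam3 r s t a b c (n + 1))^2
           + 2 * t * horadam3 r s t a b c n * horadam3 r s t a b c (n + 1)
   = c * horadam3 r s t a b c (2 * n + 2) + (s * b + t * a) * horadam3 r s t a b c (2 * n + 1)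
           + t * b * horadam3 r s t a b c (2 * n)"
proof -
  have "BB r s t (horadam3 r s t a b c) (horadam3 r s t a b c) n n = BB r s t (horadam3 r s t a b c) (horadam3 r s t a b c) 0 (n+n)"
    using BB_sum[of "horadam3 r s t a b c" r s t "horadam3 r s t a b c", OF H_rec H_rec, of n n]
      BB_sum[of "horadam3 r s t a b c" r s t "horadam3 r s t a b c", OF H_rec H_rec, of 0 "n+n"] by simp
  then show ?thesis unfolding BB_def by (simp only: H012 mult_2 power2_eq_square) (simp add: algebra_simps)
qed


lemma trib_F: "trib3 r s t k = trib3_pred r s t (Suc k)"
  by (simp add: trib3_pred_def)

theorem corollary3p5:
  fixes r s t a b c :: real and n :: nat
  assumes "t \<noteq> 0"
  shows "(horadam3 r s t a b c (n + 2))^2 + s * (horadam3 r s t a b c (n + 1))^2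
           + 2 * t * horadam3 r s t a b c n * horadam3 r s t a b c (n + 1)
         = (c^2 + s * b^2 + 2 * t * a * b) * trib3 r s t (2 * n + 1)
           + (b^2 * (t - r * s) + 2 * t * a * c + 2 * s * b * c - 2 * r * t * a * b) * trib3 r s t (2 * n)
           + t * (t * a^2 - r * b^2 + 2 * b * c) * trib3_pred r s t (2 * n)
       \<and> (c^2 + s * b^2 + 2 * t * a * b) * trib3 r s t (2 * n + 1)
           + (b^2 * (t - r * s) + 2 * t * a * c + 2 * s * b * c - 2 * r * t * a * b) * trib3 r s t (2 * n)
           + t * (t * a^2 - r * b^2 + 2 * b * c) * trib3_pred r s t (2 * n)
         = c * horadam3 r s t a b c (2 * n + 2) + (s * b + t * a) * horadam3 r s t a b c (2 * n + 1)
           + t * b * horadam3 r s t a b c (2 * n)"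
proof -
  let ?M = "(c^2 + s * b^2 + 2 * t * a * b) * trib3 r s t (2 * n + 1)
           + (b^2 * (t - r * s) + 2 * t * a * c + 2 * s * b * c - 2 * r * t * a * b) * trib3 r s t (2 * n)
           + t * (t * a^2 - r * b^2 + 2 * b * c) * trib3_pred r s t (2 * n)"
  let ?R = "c * horadam3 r s t a b c (2 * n + 2) + (s * b + t * a) * horadam3 r s t a b c (2 * n + 1)
           + t * b * horadam3 r s t a b c (2 * n)"
  have "?M = ?R"
  proof (cases n)
    case 0
    then show ?thesis by (simp add: trib3_pred_def H012 power2_eq_square algebra_simps)
  next
    case (Suc m)
    define j where "j = 2*m"
    define F where "F = trib3_pred r s t"
    have n2: "2*n = j+2" "2*n+1 = (j+1)+2" "2*n+2 = (j+2)+2" "Suc (2*n) = j+3" "Suc (2*n+1) = j+4"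
      using Suc j_def by simp_all
    have e3: "F (j+3) = r * F (j+2) + s * F (j+1) + t * F j" unfolding F_def by (rule F_rec)
    have e4: "F (j+4) = r * F (j+3) + s * F (j+2) + t * F (j+1)"
      proof -
      have q: "j+1+3 = j+4" "j+1+2 = j+3" "j+1+1 = j+2" by simp_all
      show ?thesis unfolding F_def using F_rec[of r s t "j+1"] unfolding q .
    qed
    have h1: "horadam3 r s t a b c (j+2) = c * F (j+2) + (s*b+t*a) * F (j+1) + t*b*F j"
      unfolding F_def by (rule H_F)
    have h2: "horadam3 r s t a b c ((j+1)+2) = c * F (j+3) + (s*b+t*a) * F (j+2) + t*b*F (j+1)"
      proof -
      have q: "j+1+2 = j+3" "j+1+1 = j+2" by simp_all
      show ?thesis unfolding F_def using H_F[of r s t a b c "j+1"] unfolding q .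
    qed
    have h3: "horadam3 r s t a b c ((j+2)+2) = c * F (j+4) + (s*b+t*a) * F (j+3) + t*b*F (j+2)"
      proof -
      have q: "j+2+2 = j+4" "j+2+1 = j+3" by simp_all
      show ?thesis unfolding F_def using H_F[of r s t a b c "j+2"] unfolding q .
    qed
    have "?M = (c^2 + s * b^2 + 2 * t * a * b) * F (j+4)
           + (b^2 * (t - r * s) + 2 * t * a * c + 2 * s * b * c - 2 * r * t * a * b) * F (j+3)
           + t * (t * a^2 - r * b^2 + 2 * b * c) * F (j+2)"
      unfolding trib_F F_def n2 by (simp add: eval_nat_numeral)
    moreover have "?R = c * horadam3 r s t a b c ((j+2)+2) + (s * b + t * a) * horadam3 r s t a b c ((j+1)+2)
           + t * b * horadam3 r s t a b c (j+2)"
      by (subst n2(3), subst n2(2), subst n2(1), rule refl)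
    ultimately show ?thesis unfolding h1 h2 h3 e4 unfolding e3
      by (simp add: power2_eq_square algebra_simps)
  qed
  then show ?thesis using HH[of r s t a b c n] by simp
qed

end
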